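(* Let $f:(\mathcal A,\equiv_A)\to(\mathcal C,\equiv_C)$ and $g:(\mathcal B,\equiv_B)\to(\mathcal C,\equiv_C)$ be total maps of equivalence families, with underlying sets $A=\bigcup\mathcal A$, $B=\bigcup\mathcal B$. Let $D=\{(a,b)\in A\times B\mid f(a)\equiv_C g(b)\}$ with projections $\pi_1,\pi_2$, let $d\equiv_D d'$ iff $\pi_1(d)\equiv_A\pi_1(d')$ and $\pi_2(d)\equiv_B\pi_2(d')$, and let $\mathcal D$ consist of those $x\subseteq D$ with $\pi_1x\in\mathcal A$, $\pi_2x\in\mathcal B$ and such that for every $d\in x$ there are $d_1,\dots,d_n\in x$ with $d_n=d$ and $\pi_1\{d_1,\dots,d_i\}\in\mathcal A$ and $\pi_2\{d_1,\dots,d_i\}\in\mathcal B$ for all $i\le n$. Then $(\mathcal D,\equiv_D)$ with $\pi_1,\pi_2$ is a pseudo pullback of $f$ and $g$ in the category of equivalence families; if $\equiv_C$ is the identity it is moreover a pullback.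
   Context: A family of configurations is a family $\mathcal F$ of sets such that (i) if $X\subseteq\mathcal F$ is finitely compatible in $\mathcal F$ (every finite subfamily has an upper bound in $\mathcal F$) then $\bigcup X\in\mathcal F$; and (ii) if $e\in x\in\mathcal F$ there are $e_1,\dots,e_n=e$ in $x$ with $\{e_1,\dots,e_i\}\in\mathcal F$ for all $i\le n$. An equivalence family (ef) $(\mathcal A,\equiv_A)$ is a family of configurations $\mathcal A$ with an equivalence relation $\equiv_A$ on $\bigcup\mathcal A$. A map of ef's $f:(\mathcal A,\equiv_A)\to(\mathcal B,\equiv_B)$ is a partial function $f:\bigcup\mathcal A\rightharpoonup\bigcup\mathcal B$ preserving $\equiv$ (if $a_1\equiv_A a_2$ then $f(a_1),f(a_2)$ are both undefined or both defined and equivalent) such that for every $x\in\mathcal A$, $fx\in\mathcal B$ and for $a_1,a_2\in x$, $f(a_1)\equiv_B f(a_2)$ implies $a_1\equiv_A a_2$. Maps compose as partial functions. Two maps are equivalent, $f_1\equiv f_2$, iff they are defined on the same elements and $f_1(a)\equiv f_2(a)$ wherever defined. A pseudo pullback of $f,g$ is an ef $\mathcal D$ with maps $p:\mathcal D\to\mathcal A$, $q:\mathcal D\to\mathcal B$ such that $f\circ p\equiv g\circ q$ and for every $\mathcal D'$ with maps $p',q'$ satisfying $f\circ p'\equiv g\circ q'$ there is a unique map $h:\mathcal D'\to\mathcal D$ with $p'=p\circ h$ and $q'=q\circ h$. *)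

theory Defs
  imports Main
begin

definition fin_compat :: "'a set set \<Rightarrow> 'a set set \<Rightarrow> bool" where
  "fin_compat F X \<longleftrightarrow> (\<forall>Y. Y \<subseteq> X \<longrightarrow> finite Y \<longrightarrow> (\<exists>z\<in>F. \<forall>y\<in>Y. y \<subseteq> z))"

definition family_of_configs :: "'a set set \<Rightarrow> bool" where
  "family_of_configs F \<longleftrightarrow>
     (\<forall>X. X \<subseteq> F \<longrightarrow> fin_compat F X \<longrightarrow> \<Union>X \<in> F) \<and>
     (\<forall>x\<in>F. \<forall>e\<in>x. \<exists>es. es \<noteq> [] \<and> last es = e \<and> set es \<subseteq> x \<and>
                          (\<forall>i\<in>{1..length es}. set (take i es) \<in> F))"

type_synonym 'a ef = "'a set set \<times> ('a \<times> 'a) set"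

definition is_ef :: "'a ef \<Rightarrow> bool" where
  "is_ef E \<longleftrightarrow> family_of_configs (fst E) \<and> equiv (\<Union>(fst E)) (snd E)"

definition pimage :: "('a \<Rightarrow> 'b option) \<Rightarrow> 'a set \<Rightarrow> 'b set" where
  "pimage f x = {b. \<exists>a\<in>x. f a = Some b}"

definition is_ef_map :: "'a ef \<Rightarrow> 'b ef \<Rightarrow> ('a \<Rightarrow> 'b option) \<Rightarrow> bool" where
  "is_ef_map A B f \<longleftrightarrow>
     dom f \<subseteq> \<Union>(fst A) \<and>
     (\<forall>a1 a2. (a1, a2) \<in> snd A \<longrightarrow>
        (f a1 = None \<and> f a2 = None) \<or>
        (\<exists>b1 b2. f a1 = Some b1 \<and> f a2 = Some b2 \<and> (b1, b2) \<in> snd B)) \<and>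
     (\<forall>x\<in>fst A. pimage f x \<in> fst B \<and>
        (\<forall>a1\<in>x. \<forall>a2\<in>x. \<forall>b1 b2. f a1 = Some b1 \<longrightarrow> f a2 = Some b2 \<longrightarrow>
            (b1, b2) \<in> snd B \<longrightarrow> (a1, a2) \<in> snd A))"

definition total_map :: "'a ef \<Rightarrow> ('a \<Rightarrow> 'b option) \<Rightarrow> bool" where
  "total_map A f \<longleftrightarrow> dom f = \<Union>(fst A)"

definition map_equiv :: "('b \<times> 'b) set \<Rightarrow> ('a \<Rightarrow> 'b option) \<Rightarrow> ('a \<Rightarrow> 'b option) \<Rightarrow> bool" where
  "map_equiv R f1 f2 \<longleftrightarrow> dom f1 = dom f2 \<and>
     (\<forall>a b1 b2. f1 a = Some b1 \<longrightarrow> f2 a = Some b2 \<longrightarrow> (b1, b2) \<in> R)"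

section \<open>Pseudo pullbacks and pullbacks (universal property w.r.t. test objects of type 'd)\<close>

definition is_pseudo_pullback ::
  "'d itself \<Rightarrow> 'a ef \<Rightarrow> 'b ef \<Rightarrow> 'c ef \<Rightarrow> ('a \<Rightarrow> 'c option) \<Rightarrow> ('b \<Rightarrow> 'c option)
   \<Rightarrow> 'e ef \<Rightarrow> ('e \<Rightarrow> 'a option) \<Rightarrow> ('e \<Rightarrow> 'b option) \<Rightarrow> bool" where
  "is_pseudo_pullback (_::'d itself) A B C f g D p q \<longleftrightarrow>
     is_ef D \<and> is_ef_map D A p \<and> is_ef_map D B q \<and>
     map_equiv (snd C) (f \<circ>\<^sub>m p) (g \<circ>\<^sub>m q) \<and>
     (\<forall>(D'::'d ef) p' q'. is_ef D' \<and> is_ef_map D' A p' \<and> is_ef_map D' B q' \<and>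
        map_equiv (snd C) (f \<circ>\<^sub>m p') (g \<circ>\<^sub>m q') \<longrightarrow>
        (\<exists>!h. is_ef_map D' D h \<and> p' = p \<circ>\<^sub>m h \<and> q' = q \<circ>\<^sub>m h))"

definition is_pullback ::
  "'d itself \<Rightarrow> 'a ef \<Rightarrow> 'b ef \<Rightarrow> 'c ef \<Rightarrow> ('a \<Rightarrow> 'c option) \<Rightarrow> ('b \<Rightarrow> 'c option)
   \<Rightarrow> 'e ef \<Rightarrow> ('e \<Rightarrow> 'a option) \<Rightarrow> ('e \<Rightarrow> 'b option) \<Rightarrow> bool" where
  "is_pullback (_::'d itself) A B C f g D p q \<longleftrightarrow>
     is_ef D \<and> is_ef_map D A p \<and> is_ef_map D B q \<and>
     f \<circ>\<^sub>m p = g \<circ>\<^sub>m q \<and>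
     (\<forall>(D'::'d ef) p' q'. is_ef D' \<and> is_ef_map D' A p' \<and> is_ef_map D' B q' \<and>
        f \<circ>\<^sub>m p' = g \<circ>\<^sub>m q' \<longrightarrow>
        (\<exists>!h. is_ef_map D' D h \<and> p' = p \<circ>\<^sub>m h \<and> q' = q \<circ>\<^sub>m h))"

definition pb_set :: "'a ef \<Rightarrow> 'b ef \<Rightarrow> 'c ef \<Rightarrow> ('a \<Rightarrow> 'c option) \<Rightarrow> ('b \<Rightarrow> 'c option) \<Rightarrow> ('a \<times> 'b) set" where
  "pb_set A B C f g = {(a, b). a \<in> \<Union>(fst A) \<and> b \<in> \<Union>(fst B) \<and>
      (\<exists>c1 c2. f a = Some c1 \<and> g b = Some c2 \<and> (c1, c2) \<in> snd C)}"

definition pb_configs :: "'a ef \<Rightarrow> 'b ef \<Rightarrow> 'c ef \<Rightarrow> ('a \<Rightarrow> 'c option) \<Rightarrow> ('b \<Rightarrow> 'c option) \<Rightarrow> ('a \<times> 'b) set set" where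
  "pb_configs A B C f g = {x. x \<subseteq> pb_set A B C f g \<and> fst ` x \<in> fst A \<and> snd ` x \<in> fst B \<and>
      (\<forall>d\<in>x. \<exists>ds. ds \<noteq> [] \<and> last ds = d \<and> set ds \<subseteq> x \<and>
          (\<forall>i\<in>{1..length ds}. fst ` set (take i ds) \<in> fst A \<and> snd ` set (take i ds) \<in> fst B))}"

definition pb_rel :: "'a ef \<Rightarrow> 'b ef \<Rightarrow> 'c ef \<Rightarrow> ('a \<Rightarrow> 'c option) \<Rightarrow> ('b \<Rightarrow> 'c option) \<Rightarrow> (('a \<times> 'b) \<times> ('a \<times> 'b)) set" where
  "pb_rel A B C f g = {(d, d'). d \<in> \<Union>(pb_configs A B C f g) \<and> d' \<in> \<Union>(pb_configs A B C f g) \<and>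
      (fst d, fst d') \<in> snd A \<and> (snd d, snd d') \<in> snd B}"

definition pb_ef :: "'a ef \<Rightarrow> 'b ef \<Rightarrow> 'c ef \<Rightarrow> ('a \<Rightarrow> 'c option) \<Rightarrow> ('b \<Rightarrow> 'c option) \<Rightarrow> ('a \<times> 'b) ef" where
  "pb_ef A B C f g = (pb_configs A B C f g, pb_rel A B C f g)"

definition pb_p1 :: "'a ef \<Rightarrow> 'b ef \<Rightarrow> 'c ef \<Rightarrow> ('a \<Rightarrow> 'c option) \<Rightarrow> ('b \<Rightarrow> 'c option) \<Rightarrow> ('a \<times> 'b) \<Rightarrow> 'a option" where
  "pb_p1 A B C f g d = (if d \<in> \<Union>(pb_configs A B C f g) then Some (fst d) else None)"

definition pb_p2 :: "'a ef \<Rightarrow> 'b ef \<Rightarrow> 'c ef \<Rightarrow> ('a \<Rightarrow> 'c option) \<Rightarrow> ('b \<Rightarrow> 'c option) \<Rightarrow> ('a \<times> 'b) \<Rightarrow> 'b option" where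
  "pb_p2 A B C f g d = (if d \<in> \<Union>(pb_configs A B C f g) then Some (snd d) else None)"

end

theory Submission
  imports Defs
begin

lemma mf_set: "set (List.map_filter h l) = pimage h (set l)"
  by (induction l) (auto simp: pimage_def split: option.splits)

lemma mf_take: "i \<le> length (List.map_filter h es) \<Longrightarrow>
   \<exists>j\<le>length es. take i (List.map_filter h es) = List.map_filter h (take j es)"
proof (induction es arbitrary: i)
  case Nil then show ?case by simp
next
  case (Cons e es)
  show ?case
  proof (cases "h e")
    case None
    with Cons obtain j where "j \<le> length es" "take i (List.map_filter h es) = List.map_filter h (take j es)"
      by auto
    with None show ?thesis by (intro exI[of _ "Suc j"]) auto
  next
    case (Some d)
    show ?thesis
    proof (cases i)
      case 0 then show ?thesis by (intro exI[of _ 0]) auto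
    next
      case (Suc i')
      with Cons Some obtain j where "j \<le> length es" "take i' (List.map_filter h es) = List.map_filter h (take j es)"
        by auto
      with Some Suc show ?thesis by (intro exI[of _ "Suc j"]) auto
    qed
  qed
qed

lemma mf_append: "List.map_filter h (xs @ ys) = List.map_filter h xs @ List.map_filter h ys"
  by (induction xs) (auto split: option.splits)

lemma mf_last: assumes "es \<noteq> []" "h (last es) = Some d"
  shows "List.map_filter h es \<noteq> [] \<and> last (List.map_filter h es) = d"
  using assms by (induction es rule: rev_induct) (auto simp: mf_append)

lemma ef_map_range:
  assumes "is_ef_map D A p" "p e = Some a" shows "a \<in> \<Union>(fst A)"
proof -
  from assms have "e \<in> \<Union>(fst D)" unfolding is_ef_map_def by blast
  then obtain x where x: "x \<in> fst D" "e \<in> x" by blast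
  with assms have "pimage p x \<in> fst A" "a \<in> pimage p x" unfolding is_ef_map_def pimage_def by auto
  thus ?thesis by blast
qed

lemma pb_family:
  assumes A: "is_ef A" and B: "is_ef B"
  shows "family_of_configs (pb_configs A B C f g)"
  unfolding family_of_configs_def
proof (intro conjI allI impI ballI)
  fix X assume XP: "X \<subseteq> pb_configs A B C f g" and fc: "fin_compat (pb_configs A B C f g) X"
  have famA: "family_of_configs (fst A)" using A is_ef_def by blast
  have famB: "family_of_configs (fst B)" using B is_ef_def by blast
  have fA: "fst ` \<Union>X \<in> fst A"
  proof -
    have "(\<Union>((`) fst ` X)) \<in> fst A"
    proof (rule famA[unfolded family_of_configs_def, THEN conjunct1, rule_format])
      show "(`) fst ` X \<subseteq> fst A" using XP unfolding pb_configs_def by auto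
      show "fin_compat (fst A) ((`) fst ` X)" unfolding fin_compat_def
      proof (intro allI impI)
        fix Y assume "Y \<subseteq> (`) fst ` X" "finite Y"
        then obtain Y0 where Y0: "Y0 \<subseteq> X" "finite Y0" "Y = (`) fst ` Y0" by (meson finite_subset_image)
        then obtain z where "z \<in> pb_configs A B C f g" "\<forall>y\<in>Y0. y \<subseteq> z" using fc unfolding fin_compat_def by blast
        then show "\<exists>z\<in>fst A. \<forall>y\<in>Y. y \<subseteq> z" using Y0 unfolding pb_configs_def
          by (intro bexI[of _ "fst ` z"]) auto
      qed
    qed
    moreover have "\<Union>((`) fst ` X) = fst ` \<Union>X" by auto
    ultimately show ?thesis by simp
  qed
  have fB: "snd ` \<Union>X \<in> fst B"
  proof -
    have "(\<Union>((`) snd ` X)) \<in> fst B"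
    proof (rule famB[unfolded family_of_configs_def, THEN conjunct1, rule_format])
      show "(`) snd ` X \<subseteq> fst B" using XP unfolding pb_configs_def by auto
      show "fin_compat (fst B) ((`) snd ` X)" unfolding fin_compat_def
      proof (intro allI impI)
        fix Y assume "Y \<subseteq> (`) snd ` X" "finite Y"
        then obtain Y0 where Y0: "Y0 \<subseteq> X" "finite Y0" "Y = (`) snd ` Y0" by (meson finite_subset_image)
        then obtain z where "z \<in> pb_configs A B C f g" "\<forall>y\<in>Y0. y \<subseteq> z" using fc unfolding fin_compat_def by blast
        then show "\<exists>z\<in>fst B. \<forall>y\<in>Y. y \<subseteq> z" using Y0 unfolding pb_configs_def
          by (intro bexI[of _ "snd ` z"]) auto
      qed
    qed
    moreover have "\<Union>((`) snd ` X) = snd ` \<Union>X" by auto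
    ultimately show ?thesis by simp
  qed
  show "\<Union>X \<in> pb_configs A B C f g"
    unfolding pb_configs_def
  proof (intro CollectI conjI ballI)
    show "\<Union>X \<subseteq> pb_set A B C f g" using XP unfolding pb_configs_def by auto
    show "fst ` \<Union>X \<in> fst A" by (rule fA)
    show "snd ` \<Union>X \<in> fst B" by (rule fB)
    fix d assume "d \<in> \<Union>X" then obtain x where x: "x\<in>X" "d\<in>x" by blast
    then have "x \<in> pb_configs A B C f g" using XP by auto
    then obtain ds where "ds \<noteq> [] \<and> last ds = d \<and> set ds \<subseteq> x \<and>
          (\<forall>i\<in>{1..length ds}. fst ` set (take i ds) \<in> fst A \<and> snd ` set (take i ds) \<in> fst B)"
      using x unfolding pb_configs_def by blast
    then show "\<exists>ds. ds \<noteq> [] \<and> last ds = d \<and> set ds \<subseteq> \<Union>X \<and>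
          (\<forall>i\<in>{1..length ds}. fst ` set (take i ds) \<in> fst A \<and> snd ` set (take i ds) \<in> fst B)"
      using x by blast
  qed
next
  fix x e assume xP: "x \<in> pb_configs A B C f g" and "e \<in> x"
  then obtain ds where ds: "ds \<noteq> []" "last ds = e" "set ds \<subseteq> x"
    "\<forall>i\<in>{1..length ds}. fst ` set (take i ds) \<in> fst A \<and> snd ` set (take i ds) \<in> fst B"
    unfolding pb_configs_def by blast
  have "\<forall>i\<in>{1..length ds}. set (take i ds) \<in> pb_configs A B C f g"
  proof
    fix i assume i: "i \<in> {1..length ds}"
    show "set (take i ds) \<in> pb_configs A B C f g" unfolding pb_configs_def
    proof (intro CollectI conjI ballI)
      have "x \<subseteq> pb_set A B C f g" using xP unfolding pb_configs_def by simp
      then show "set (take i ds) \<subseteq> pb_set A B C f g" using ds(3) set_take_subset[of i ds] by blast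
      show "fst ` set (take i ds) \<in> fst A" using ds(4) i by auto
      show "snd ` set (take i ds) \<in> fst B" using ds(4) i by auto
      fix d' assume "d' \<in> set (take i ds)"
      then obtain j where j: "j < length (take i ds)" "d' = take i ds ! j" by (auto simp: in_set_conv_nth)
      hence jl: "j < i" "j < length ds" "d' = ds ! j" by auto
      let ?ds = "take (Suc j) ds"
      have 1: "?ds \<noteq> []" using jl by auto
      have 2: "last ?ds = d'" using jl by (simp add: take_Suc_conv_app_nth)
      have 3: "set ?ds \<subseteq> set (take i ds)" using jl by (simp add: set_take_subset_set_take)
      have 4: "\<forall>k\<in>{1..length ?ds}. fst ` set (take k ?ds) \<in> fst A \<and> snd ` set (take k ?ds) \<in> fst B"
      proof
        fix k assume k: "k \<in> {1..length ?ds}"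
        have lk: "length ?ds = Suc j" using jl by simp
        hence kk: "1 \<le> k" "k \<le> Suc j" using k by auto
        hence "take k ?ds = take k ds" by (simp add: min_def)
        moreover have "k \<in> {1..length ds}" using kk jl by auto
        ultimately have "take k ?ds = take k ds" "k \<in> {1..length ds}" by auto
        thus "fst ` set (take k ?ds) \<in> fst A \<and> snd ` set (take k ?ds) \<in> fst B" using ds(4) by auto
      qed
      show "\<exists>ds'. ds' \<noteq> [] \<and> last ds' = d' \<and> set ds' \<subseteq> set (take i ds) \<and>
          (\<forall>i\<in>{1..length ds'}. fst ` set (take i ds') \<in> fst A \<and> snd ` set (take i ds') \<in> fst B)"
        using 1 2 3 4 by blast
    qed
  qed
  then show "\<exists>es. es \<noteq> [] \<and> last es = e \<and> set es \<subseteq> x \<and>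
     (\<forall>i\<in>{1..length es}. set (take i es) \<in> pb_configs A B C f g)" using ds by blast
qed

lemma pb_mem:
  "d \<in> \<Union>(pb_configs A B C f g) \<Longrightarrow> fst d \<in> \<Union>(fst A) \<and> snd d \<in> \<Union>(fst B)"
  unfolding pb_configs_def by blast

lemma pb_equiv:
  assumes "is_ef A" "is_ef B"
  shows "equiv (\<Union>(pb_configs A B C f g)) (pb_rel A B C f g)"
proof -
  have eA: "equiv (\<Union>(fst A)) (snd A)" and eB: "equiv (\<Union>(fst B)) (snd B)"
    using assms is_ef_def by blast+
  have rA: "\<And>a. a \<in> \<Union>(fst A) \<Longrightarrow> (a,a) \<in> snd A" using eA unfolding equiv_def refl_on_def by blast
  have rB: "\<And>a. a \<in> \<Union>(fst B) \<Longrightarrow> (a,a) \<in> snd B" using eB unfolding equiv_def refl_on_def by blast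
  have sA: "\<And>a b. (a,b) \<in> snd A \<Longrightarrow> (b,a) \<in> snd A" using eA by (meson equiv_def symD)
  have sB: "\<And>a b. (a,b) \<in> snd B \<Longrightarrow> (b,a) \<in> snd B" using eB by (meson equiv_def symD)
  have tA: "\<And>a b c. (a,b) \<in> snd A \<Longrightarrow> (b,c) \<in> snd A \<Longrightarrow> (a,c) \<in> snd A" using eA by (meson equiv_def transD)
  have tB: "\<And>a b c. (a,b) \<in> snd B \<Longrightarrow> (b,c) \<in> snd B \<Longrightarrow> (a,c) \<in> snd B" using eB by (meson equiv_def transD)
  show ?thesis
  proof (rule equivI)
    show "pb_rel A B C f g \<subseteq> \<Union>(pb_configs A B C f g) \<times> \<Union>(pb_configs A B C f g)"
        unfolding pb_rel_def by auto
    show "refl_on (\<Union>(pb_configs A B C f g)) (pb_rel A B C f g)"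
      unfolding refl_on_def
    proof (intro ballI)
      fix d assume d: "d \<in> \<Union>(pb_configs A B C f g)"
      then show "(d, d) \<in> pb_rel A B C f g" using pb_mem[OF d] rA rB unfolding pb_rel_def by auto
    qed
    show "sym (pb_rel A B C f g)"
      by (rule symI) (auto simp: pb_rel_def intro: sA sB)
    show "trans (pb_rel A B C f g)"
      by (rule transI) (auto simp: pb_rel_def intro: tA tB)
  qed
qed


lemma equiv_facts:
  assumes "is_ef E"
  shows "\<And>a. a \<in> \<Union>(fst E) \<Longrightarrow> (a,a) \<in> snd E"
    and "\<And>a b. (a,b) \<in> snd E \<Longrightarrow> (b,a) \<in> snd E"
    and "\<And>a b c. (a,b) \<in> snd E \<Longrightarrow> (b,c) \<in> snd E \<Longrightarrow> (a,c) \<in> snd E"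
    and "\<And>a b. (a,b) \<in> snd E \<Longrightarrow> a \<in> \<Union>(fst E)"
proof -
  have e: "equiv (\<Union>(fst E)) (snd E)" using assms is_ef_def by blast
  show "\<And>a. a \<in> \<Union>(fst E) \<Longrightarrow> (a,a) \<in> snd E" using e unfolding equiv_def refl_on_def by blast
  show "\<And>a b. (a,b) \<in> snd E \<Longrightarrow> (b,a) \<in> snd E" using e by (meson equiv_def symD)
  show "\<And>a b c. (a,b) \<in> snd E \<Longrightarrow> (b,c) \<in> snd E \<Longrightarrow> (a,c) \<in> snd E" using e by (meson equiv_def transD)
  show "\<And>a b. (a,b) \<in> snd E \<Longrightarrow> a \<in> \<Union>(fst E)" using e unfolding equiv_def by blast
qed

lemma pb_set_mem:
  assumes "d \<in> \<Union>(pb_configs A B C f g)"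
  shows "\<exists>c1 c2. f (fst d) = Some c1 \<and> g (snd d) = Some c2 \<and> (c1, c2) \<in> snd C"
proof -
  obtain x where "x \<in> pb_configs A B C f g" "d \<in> x" using assms by blast
  then have "d \<in> pb_set A B C f g" unfolding pb_configs_def by blast
  then show ?thesis unfolding pb_set_def by (cases d) auto
qed

lemma pb_p1_map:
  assumes A: "is_ef A" and B: "is_ef B" and C: "is_ef C"
    and fm: "is_ef_map A C f" and gm: "is_ef_map B C g"
  shows "is_ef_map (pb_ef A B C f g) A (pb_p1 A B C f g)"
  unfolding is_ef_map_def pb_ef_def fst_conv snd_conv
proof (intro conjI allI impI ballI)
  show "dom (pb_p1 A B C f g) \<subseteq> \<Union>(pb_configs A B C f g)"
    by (auto simp: pb_p1_def split: if_splits)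
  fix a1 a2 assume "(a1,a2) \<in> pb_rel A B C f g"
  then show "(pb_p1 A B C f g a1 = None \<and> pb_p1 A B C f g a2 = None) \<or>
     (\<exists>b1 b2. pb_p1 A B C f g a1 = Some b1 \<and> pb_p1 A B C f g a2 = Some b2 \<and> (b1, b2) \<in> snd A)"
    by (auto simp: pb_rel_def pb_p1_def)
next
  fix x assume x: "x \<in> pb_configs A B C f g"
  have "pimage (pb_p1 A B C f g) x = fst ` x" using x by (auto simp: pimage_def pb_p1_def)
  then show "pimage (pb_p1 A B C f g) x \<in> fst A" using x unfolding pb_configs_def by simp
  fix d1 d2 b1 b2 assume d: "d1 \<in> x" "d2 \<in> x" "pb_p1 A B C f g d1 = Some b1"
    "pb_p1 A B C f g d2 = Some b2" and ab: "(b1, b2) \<in> snd A"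
  have U: "d1 \<in> \<Union>(pb_configs A B C f g)" "d2 \<in> \<Union>(pb_configs A B C f g)" using x d by auto
  hence b: "b1 = fst d1" "b2 = fst d2" using d by (auto simp: pb_p1_def)
  obtain c1 c1' where c1: "f (fst d1) = Some c1" "g (snd d1) = Some c1'" "(c1,c1') \<in> snd C"
    using pb_set_mem[OF U(1)] by blast
  obtain c2 c2' where c2: "f (fst d2) = Some c2" "g (snd d2) = Some c2'" "(c2,c2') \<in> snd C"
    using pb_set_mem[OF U(2)] by blast
  have "(c1, c2) \<in> snd C" using fm ab b c1 c2 unfolding is_ef_map_def by fastforce
  hence cc: "(c1', c2') \<in> snd C" using c1 c2 equiv_facts[OF C] by meson
  have sx: "snd ` x \<in> fst B" using x unfolding pb_configs_def by simp
  have "(snd d1, snd d2) \<in> snd B"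
    using gm sx d(1,2) c1(2) c2(2) cc unfolding is_ef_map_def by blast
  then show "(d1, d2) \<in> pb_rel A B C f g"
    using U ab b unfolding pb_rel_def by auto
qed

lemma pb_p2_map:
  assumes A: "is_ef A" and B: "is_ef B" and C: "is_ef C"
    and fm: "is_ef_map A C f" and gm: "is_ef_map B C g"
  shows "is_ef_map (pb_ef A B C f g) B (pb_p2 A B C f g)"
  unfolding is_ef_map_def pb_ef_def fst_conv snd_conv
proof (intro conjI allI impI ballI)
  show "dom (pb_p2 A B C f g) \<subseteq> \<Union>(pb_configs A B C f g)"
    by (auto simp: pb_p2_def split: if_splits)
  fix a1 a2 assume "(a1,a2) \<in> pb_rel A B C f g"
  then show "(pb_p2 A B C f g a1 = None \<and> pb_p2 A B C f g a2 = None) \<or>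
     (\<exists>b1 b2. pb_p2 A B C f g a1 = Some b1 \<and> pb_p2 A B C f g a2 = Some b2 \<and> (b1, b2) \<in> snd B)"
    by (auto simp: pb_rel_def pb_p2_def)
next
  fix x assume x: "x \<in> pb_configs A B C f g"
  have "pimage (pb_p2 A B C f g) x = snd ` x" using x by (auto simp: pimage_def pb_p2_def)
  then show "pimage (pb_p2 A B C f g) x \<in> fst B" using x unfolding pb_configs_def by simp
  fix d1 d2 b1 b2 assume d: "d1 \<in> x" "d2 \<in> x" "pb_p2 A B C f g d1 = Some b1"
    "pb_p2 A B C f g d2 = Some b2" and ab: "(b1, b2) \<in> snd B"
  have U: "d1 \<in> \<Union>(pb_configs A B C f g)" "d2 \<in> \<Union>(pb_configs A B C f g)" using x d by auto
  hence b: "b1 = snd d1" "b2 = snd d2" using d by (auto simp: pb_p2_def)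
  obtain c1 c1' where c1: "f (fst d1) = Some c1" "g (snd d1) = Some c1'" "(c1,c1') \<in> snd C"
    using pb_set_mem[OF U(1)] by blast
  obtain c2 c2' where c2: "f (fst d2) = Some c2" "g (snd d2) = Some c2'" "(c2,c2') \<in> snd C"
    using pb_set_mem[OF U(2)] by blast
  have "(c1', c2') \<in> snd C" using gm ab b c1 c2 unfolding is_ef_map_def by fastforce
  hence cc: "(c1, c2) \<in> snd C" using c1 c2 equiv_facts[OF C] by meson
  have sx: "fst ` x \<in> fst A" using x unfolding pb_configs_def by simp
  have "(fst d1, fst d2) \<in> snd A"
    using fm sx d(1,2) c1(1) c2(1) cc unfolding is_ef_map_def by blast
  then show "(d1, d2) \<in> pb_rel A B C f g"
    using U ab b unfolding pb_rel_def by auto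
qed

lemma pb_commute:
  shows "map_equiv (snd C) (f \<circ>\<^sub>m pb_p1 A B C f g) (g \<circ>\<^sub>m pb_p2 A B C f g)"
  unfolding map_equiv_def
proof (intro conjI allI impI)
  show "dom (f \<circ>\<^sub>m pb_p1 A B C f g) = dom (g \<circ>\<^sub>m pb_p2 A B C f g)"
    using pb_set_mem[of _ A B C f g] by (auto simp: dom_def map_comp_def pb_p1_def pb_p2_def)
  fix a b1 b2 assume "(f \<circ>\<^sub>m pb_p1 A B C f g) a = Some b1" "(g \<circ>\<^sub>m pb_p2 A B C f g) a = Some b2"
  then show "(b1, b2) \<in> snd C"
    using pb_set_mem[of a A B C f g] by (auto simp: map_comp_def pb_p1_def pb_p2_def split: if_splits)
qed


definition pairm :: "('e \<Rightarrow> 'a option) \<Rightarrow> ('e \<Rightarrow> 'b option) \<Rightarrow> 'e \<Rightarrow> ('a \<times> 'b) option" where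
  "pairm p q e = (case p e of None \<Rightarrow> None | Some a \<Rightarrow> (case q e of None \<Rightarrow> None | Some b \<Rightarrow> Some (a, b)))"

lemma pairm_Some: "pairm p q e = Some d \<longleftrightarrow> p e = Some (fst d) \<and> q e = Some (snd d)"
  by (cases d) (auto simp: pairm_def split: option.splits)

lemma pb_univ:
  assumes A: "is_ef A" and B: "is_ef B" and C: "is_ef C"
    and fm: "is_ef_map A C f" and gm: "is_ef_map B C g"
    and tf: "total_map A f" and tg: "total_map B g"
    and D': "is_ef D'" and pm: "is_ef_map D' A p'" and qm: "is_ef_map D' B q'"
    and me: "map_equiv (snd C) (f \<circ>\<^sub>m p') (g \<circ>\<^sub>m q')"
  shows "\<exists>!h. is_ef_map D' (pb_ef A B C f g) h \<and> p' = pb_p1 A B C f g \<circ>\<^sub>m h \<and> q' = pb_p2 A B C f g \<circ>\<^sub>m h"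
proof -
  have d1: "dom p' = dom (f \<circ>\<^sub>m p')"
  proof
    show "dom p' \<subseteq> dom (f \<circ>\<^sub>m p')"
    proof
      fix e assume "e \<in> dom p'"
      then obtain a where a: "p' e = Some a" by blast
      hence "a \<in> \<Union>(fst A)" using ef_map_range[OF pm] by blast
      hence "a \<in> dom f" using tf unfolding total_map_def by simp
      thus "e \<in> dom (f \<circ>\<^sub>m p')" using a by (auto simp: map_comp_def)
    qed
    show "dom (f \<circ>\<^sub>m p') \<subseteq> dom p'" by (auto simp: map_comp_def split: option.splits)
  qed
  have d2: "dom q' = dom (g \<circ>\<^sub>m q')"
  proof
    show "dom q' \<subseteq> dom (g \<circ>\<^sub>m q')"
    proof
      fix e assume "e \<in> dom q'"
      then obtain a where a: "q' e = Some a" by blast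
      hence "a \<in> \<Union>(fst B)" using ef_map_range[OF qm] by blast
      hence "a \<in> dom g" using tg unfolding total_map_def by simp
      thus "e \<in> dom (g \<circ>\<^sub>m q')" using a by (auto simp: map_comp_def)
    qed
    show "dom (g \<circ>\<^sub>m q') \<subseteq> dom q'" by (auto simp: map_comp_def split: option.splits)
  qed
  have domeq: "dom p' = dom q'" using d1 d2 me unfolding map_equiv_def by simp
  have pq: "\<And>e. p' e = None \<longleftrightarrow> q' e = None" using domeq by (metis domIff)
  define h where "h = pairm p' q'"
  have hS: "\<And>e d. h e = Some d \<longleftrightarrow> p' e = Some (fst d) \<and> q' e = Some (snd d)"
    unfolding h_def by (rule pairm_Some)
  have hN: "\<And>e. h e = None \<longleftrightarrow> p' e = None"
    unfolding h_def pairm_def using pq by (auto split: option.splits)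
  have dp: "dom p' \<subseteq> \<Union>(fst D')" using pm unfolding is_ef_map_def by simp
  have hdom: "\<And>e d. h e = Some d \<Longrightarrow> e \<in> \<Union>(fst D')"
  proof -
    fix e d assume "h e = Some d"
    hence "e \<in> dom p'" using hS by blast
    thus "e \<in> \<Union>(fst D')" using dp by blast
  qed
  have img1: "\<And>y. fst ` pimage h y = pimage p' y"
  proof -
    fix y show "fst ` pimage h y = pimage p' y"
    proof (rule set_eqI, rule iffI)
      fix a assume "a \<in> fst ` pimage h y"
      then show "a \<in> pimage p' y" using hS unfolding pimage_def by force
    next
      fix a assume "a \<in> pimage p' y"
      then obtain e where e: "e \<in> y" "p' e = Some a" unfolding pimage_def by blast
      have "q' e \<noteq> None" using pq[of e] e(2) by simp
      then obtain b where "q' e = Some b" by blast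
      then have "h e = Some (a, b)" using e hS by simp
      then show "a \<in> fst ` pimage h y" using e unfolding pimage_def by force
    qed
  qed
  have img2: "\<And>y. snd ` pimage h y = pimage q' y"
  proof -
    fix y show "snd ` pimage h y = pimage q' y"
    proof (rule set_eqI, rule iffI)
      fix a assume "a \<in> snd ` pimage h y"
      then show "a \<in> pimage q' y" using hS unfolding pimage_def by force
    next
      fix b assume "b \<in> pimage q' y"
      then obtain e where e: "e \<in> y" "q' e = Some b" unfolding pimage_def by blast
      have "p' e \<noteq> None" using pq[of e] e(2) by simp
      then obtain a where "p' e = Some a" by blast
      then have "h e = Some (a, b)" using e hS by simp
      then show "b \<in> snd ` pimage h y" using e unfolding pimage_def by force
    qed
  qed
  have famD: "family_of_configs (fst D')" using D' is_ef_def by blast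
  have pmE: "\<forall>a1 a2. (a1, a2) \<in> snd D' \<longrightarrow> (p' a1 = None \<and> p' a2 = None) \<or>
        (\<exists>b1 b2. p' a1 = Some b1 \<and> p' a2 = Some b2 \<and> (b1, b2) \<in> snd A)"
    using pm unfolding is_ef_map_def by (elim conjE)
  have qmE: "\<forall>a1 a2. (a1, a2) \<in> snd D' \<longrightarrow> (q' a1 = None \<and> q' a2 = None) \<or>
        (\<exists>b1 b2. q' a1 = Some b1 \<and> q' a2 = Some b2 \<and> (b1, b2) \<in> snd B)"
    using qm unfolding is_ef_map_def by (elim conjE)
  have pmA: "\<forall>x\<in>fst D'. pimage p' x \<in> fst A" using pm unfolding is_ef_map_def by blast
  have qmB: "\<forall>x\<in>fst D'. pimage q' x \<in> fst B" using qm unfolding is_ef_map_def by blast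
  have hPC: "\<And>x. x \<in> fst D' \<Longrightarrow> pimage h x \<in> pb_configs A B C f g"
  proof -
    fix x assume x: "x \<in> fst D'"
    show "pimage h x \<in> pb_configs A B C f g" unfolding pb_configs_def
    proof (intro CollectI conjI ballI)
      show "pimage h x \<subseteq> pb_set A B C f g"
      proof
        fix d assume "d \<in> pimage h x"
        then obtain e where e: "e \<in> x" "h e = Some d" unfolding pimage_def by blast
        then have pe: "p' e = Some (fst d)" "q' e = Some (snd d)" using hS by auto
        have ua: "fst d \<in> \<Union>(fst A)" using ef_map_range[OF pm pe(1)] .
        have ub: "snd d \<in> \<Union>(fst B)" using ef_map_range[OF qm pe(2)] .
        obtain c1 where c1: "f (fst d) = Some c1" using ua tf unfolding total_map_def by blast
        obtain c2 where c2: "g (snd d) = Some c2" using ub tg unfolding total_map_def by blast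
        have "(f \<circ>\<^sub>m p') e = Some c1" "(g \<circ>\<^sub>m q') e = Some c2" using pe c1 c2 by (auto simp: map_comp_def)
        hence "(c1, c2) \<in> snd C" using me unfolding map_equiv_def by blast
        then show "d \<in> pb_set A B C f g" using ua ub c1 c2 unfolding pb_set_def by (cases d) auto
      qed
      show "fst ` pimage h x \<in> fst A" using img1 pmA x by simp
      show "snd ` pimage h x \<in> fst B" using img2 qmB x by simp
      fix d assume "d \<in> pimage h x"
      then obtain e where e: "e \<in> x" "h e = Some d" unfolding pimage_def by blast
      obtain es where es: "es \<noteq> []" "last es = e" "set es \<subseteq> x"
        "\<forall>i\<in>{1..length es}. set (take i es) \<in> fst D'"
        using famD[unfolded family_of_configs_def, THEN conjunct2, rule_format, OF x e(1)] by blast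
      define ds where "ds = List.map_filter h es"
      have ds1: "ds \<noteq> [] \<and> last ds = d" unfolding ds_def using mf_last[of es h d] es e by simp
      have ds2: "set ds \<subseteq> pimage h x" unfolding ds_def mf_set using es(3) unfolding pimage_def by blast
      have ds3: "\<forall>i\<in>{1..length ds}. fst ` set (take i ds) \<in> fst A \<and> snd ` set (take i ds) \<in> fst B"
      proof
        fix i assume i: "i \<in> {1..length ds}"
        then obtain j where j: "j \<le> length es" "take i ds = List.map_filter h (take j es)"
          using mf_take[of i h es] unfolding ds_def by auto
        have "take i ds \<noteq> []" using i ds1 by auto
        hence "j \<noteq> 0" using j by (metis map_filter_simps(1) take0)
        hence "set (take j es) \<in> fst D'" using es(4) j by auto
        moreover have "set (take i ds) = pimage h (set (take j es))" using j(2) by (simp add: mf_set)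
        ultimately show "fst ` set (take i ds) \<in> fst A \<and> snd ` set (take i ds) \<in> fst B"
          using img1 img2 pmA qmB by simp
      qed
      show "\<exists>ds. ds \<noteq> [] \<and> last ds = d \<and> set ds \<subseteq> pimage h x \<and>
          (\<forall>i\<in>{1..length ds}. fst ` set (take i ds) \<in> fst A \<and> snd ` set (take i ds) \<in> fst B)"
        using ds1 ds2 ds3 by blast
    qed
  qed
  have hU: "\<And>e d. h e = Some d \<Longrightarrow> d \<in> \<Union>(pb_configs A B C f g)"
  proof -
    fix e d assume hd: "h e = Some d"
    then obtain x where "x \<in> fst D'" "e \<in> x" using hdom by blast
    then have "d \<in> pimage h x" "pimage h x \<in> pb_configs A B C f g" using hd hPC unfolding pimage_def by auto
    then show "d \<in> \<Union>(pb_configs A B C f g)" by blast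
  qed
  have hmap: "is_ef_map D' (pb_ef A B C f g) h"
    unfolding is_ef_map_def pb_ef_def fst_conv snd_conv
  proof (intro conjI allI impI ballI)
    show "dom h \<subseteq> \<Union>(fst D')" using hdom by auto
    fix e1 e2 assume ee: "(e1, e2) \<in> snd D'"
    show "h e1 = None \<and> h e2 = None \<or>
         (\<exists>b1 b2. h e1 = Some b1 \<and> h e2 = Some b2 \<and> (b1, b2) \<in> pb_rel A B C f g)"
    proof (cases "h e1")
      case None
      hence "p' e1 = None" using hN by simp
      hence "p' e2 = None" using pmE[rule_format, OF ee] by auto
      thus ?thesis using None hN by simp
    next
      case (Some d1)
      hence p1: "p' e1 = Some (fst d1)" "q' e1 = Some (snd d1)" using hS by auto
      obtain a2 where a2: "p' e2 = Some a2" "(fst d1, a2) \<in> snd A" using pmE[rule_format, OF ee] p1 by auto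
      obtain b2 where b2: "q' e2 = Some b2" "(snd d1, b2) \<in> snd B" using qmE[rule_format, OF ee] p1 by auto
      have h2: "h e2 = Some (a2, b2)" using a2 b2 hS by simp
      have "(d1, (a2, b2)) \<in> pb_rel A B C f g" using hU[OF Some] hU[OF h2] a2 b2 unfolding pb_rel_def by auto
      thus ?thesis using Some h2 by blast
    qed
  next
    fix x assume x: "x \<in> fst D'"
    show "pimage h x \<in> pb_configs A B C f g" using hPC[OF x] .
    fix e1 e2 d1 d2 assume e: "e1 \<in> x" "e2 \<in> x" "h e1 = Some d1" "h e2 = Some d2"
      "(d1, d2) \<in> pb_rel A B C f g"
    have "p' e1 = Some (fst d1)" "p' e2 = Some (fst d2)" "(fst d1, fst d2) \<in> snd A"
      using e hS unfolding pb_rel_def by auto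
    then show "(e1, e2) \<in> snd D'" using pm x e(1,2) unfolding is_ef_map_def by blast
  qed
  have fac1: "p' = pb_p1 A B C f g \<circ>\<^sub>m h"
  proof
    fix e show "p' e = (pb_p1 A B C f g \<circ>\<^sub>m h) e"
    proof (cases "h e")
      case None
      have "p' e = None" using None hN by blast
      then show ?thesis using None by (simp add: map_comp_def)
    next
      case (Some d)
      have "p' e = Some (fst d)" "q' e = Some (snd d)" using Some hS by blast+
      then show ?thesis using Some hU[OF Some] by (simp add: map_comp_def pb_p1_def)
    qed
  qed
  have fac2: "q' = pb_p2 A B C f g \<circ>\<^sub>m h"
  proof
    fix e show "q' e = (pb_p2 A B C f g \<circ>\<^sub>m h) e"
    proof (cases "h e")
      case None
      have "q' e = None" using None hN pq by blast
      then show ?thesis using None by (simp add: map_comp_def)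
    next
      case (Some d)
      have "p' e = Some (fst d)" "q' e = Some (snd d)" using Some hS by blast+
      then show ?thesis using Some hU[OF Some] by (simp add: map_comp_def pb_p2_def)
    qed
  qed
  show ?thesis
  proof (rule ex1I[of _ h])
    show "is_ef_map D' (pb_ef A B C f g) h \<and> p' = pb_p1 A B C f g \<circ>\<^sub>m h \<and> q' = pb_p2 A B C f g \<circ>\<^sub>m h"
      using hmap fac1 fac2 by blast
  next
    fix h' assume h': "is_ef_map D' (pb_ef A B C f g) h' \<and> p' = pb_p1 A B C f g \<circ>\<^sub>m h' \<and> q' = pb_p2 A B C f g \<circ>\<^sub>m h'"
    show "h' = h"
    proof
      fix e show "h' e = h e"
      proof (cases "h' e")
        case None
        hence "p' e = None" using h' by (simp add: map_comp_def)
        hence "h e = None" using hN by blast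
        thus ?thesis using None by simp
      next
        case (Some d)
        have "d \<in> \<Union>(pb_configs A B C f g)"
        proof -
          have "e \<in> \<Union>(fst D')" using h' Some unfolding is_ef_map_def by blast
          then obtain x where "x \<in> fst D'" "e \<in> x" by blast
          then have "pimage h' x \<in> pb_configs A B C f g" "d \<in> pimage h' x"
            using h' Some unfolding is_ef_map_def pb_ef_def pimage_def by auto
          thus ?thesis by blast
        qed
        hence "p' e = Some (fst d)" "q' e = Some (snd d)" using h' Some
          by (auto simp: map_comp_def pb_p1_def pb_p2_def)
        hence "h e = Some d" using hS by blast
        thus ?thesis using Some by simp
      qed
    qed
  qed
qed

theorem mainTheorem9:
  fixes A :: "'a ef" and B :: "'b ef" and C :: "'c ef"
    and f :: "'a \<Rightarrow> 'c option" and g :: "'b \<Rightarrow> 'c option"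
  assumes "is_ef A" and "is_ef B" and "is_ef C"
    and "is_ef_map A C f" and "is_ef_map B C g"
    and "total_map A f" and "total_map B g"
  shows "is_pseudo_pullback TYPE('d) A B C f g (pb_ef A B C f g) (pb_p1 A B C f g) (pb_p2 A B C f g)
       \<and> (snd C = Id_on (\<Union>(fst C)) \<longrightarrow>
          is_pullback TYPE('d) A B C f g (pb_ef A B C f g) (pb_p1 A B C f g) (pb_p2 A B C f g))"
proof -
  have efD: "is_ef (pb_ef A B C f g)"
    unfolding is_ef_def pb_ef_def fst_conv snd_conv
    using pb_family[OF assms(1,2)] pb_equiv[OF assms(1,2)] by blast
  have m1: "is_ef_map (pb_ef A B C f g) A (pb_p1 A B C f g)" using pb_p1_map assms by blast
  have m2: "is_ef_map (pb_ef A B C f g) B (pb_p2 A B C f g)" using pb_p2_map assms by blast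
  have PP: "is_pseudo_pullback TYPE('d) A B C f g (pb_ef A B C f g) (pb_p1 A B C f g) (pb_p2 A B C f g)"
    unfolding is_pseudo_pullback_def
    using efD m1 m2 pb_commute pb_univ[OF assms] by blast
  moreover have "is_pullback TYPE('d) A B C f g (pb_ef A B C f g) (pb_p1 A B C f g) (pb_p2 A B C f g)"
    if Cid: "snd C = Id_on (\<Union>(fst C))"
  proof -
    have eqm: "\<And>u v. map_equiv (snd C) u v \<Longrightarrow> u = v"
    proof
      fix u v :: "'x \<Rightarrow> 'c option" and e assume mv: "map_equiv (snd C) u v"
      show "u e = v e"
      proof (cases "u e")
        case None
        have "dom u = dom v" using mv unfolding map_equiv_def by simp
        then show ?thesis using None by (metis domIff)
      next
        case (Some c)
        have "dom u = dom v" using mv unfolding map_equiv_def by simp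
        then obtain c' where "v e = Some c'" using Some by (metis domIff not_None_eq)
        then have "(c, c') \<in> snd C" using Some mv unfolding map_equiv_def by blast
        then show ?thesis using Some \<open>v e = Some c'\<close> Cid by (auto elim: Id_onE)
      qed
    qed
    have req: "\<And>(p'::'d \<Rightarrow> 'a option) (q'::'d \<Rightarrow> 'b option) D'. is_ef_map D' A p' \<Longrightarrow>
        f \<circ>\<^sub>m p' = g \<circ>\<^sub>m q' \<Longrightarrow> map_equiv (snd C) (f \<circ>\<^sub>m p') (g \<circ>\<^sub>m q')"
    proof -
      fix p' :: "'d \<Rightarrow> 'a option" and q' :: "'d \<Rightarrow> 'b option" and D'
      assume pm: "is_ef_map D' A p'" and eq: "f \<circ>\<^sub>m p' = g \<circ>\<^sub>m q'"
      show "map_equiv (snd C) (f \<circ>\<^sub>m p') (g \<circ>\<^sub>m q')"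
        unfolding map_equiv_def
      proof (intro conjI allI impI)
        show "dom (f \<circ>\<^sub>m p') = dom (g \<circ>\<^sub>m q')" using eq by simp
        fix e c1 c2 assume c: "(f \<circ>\<^sub>m p') e = Some c1" "(g \<circ>\<^sub>m q') e = Some c2"
        then obtain a where a: "p' e = Some a" "f a = Some c1" by (auto simp: map_comp_def split: option.splits)
        have "a \<in> \<Union>(fst A)" using ef_map_range[OF pm a(1)] .
        hence "c1 \<in> \<Union>(fst C)" using ef_map_range[OF assms(4) a(2)] by simp
        moreover have "c1 = c2" using c eq by simp
        ultimately show "(c1, c2) \<in> snd C" using Cid by auto
      qed
    qed
    show ?thesis
      unfolding is_pullback_def
      using efD m1 m2 eqm[OF pb_commute] pb_univ[OF assms] req by blast
  qed
  ultimately show ?thesis by blast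
qed

end
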